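(* Let $f:\mathbb{R}^n\to(-\infty,+\infty]$ be proper, lower semicontinuous and prox-bounded with threshold $\lambda_f>0$, let $0<\lambda<\lambda_f$ and let $x\in\operatorname{dom}f$. Then the following are equivalent: (a) $\partial_p^\lambda f(x)\neq\varnothing$; (b) $h_\lambda f(x)=f(x)$ and $x\in\operatorname{dom}\partial h_\lambda f$; (c) $\operatorname{conv}(f+\lambda^{-1}j)(x)=(f+\lambda^{-1}j)(x)$ and $x\in\operatorname{dom}\partial[\operatorname{conv}(f+\lambda^{-1}j)]$.
   Context: $j:=\frac12\|\cdot\|^2$. $e_\lambda f(x):=\inf_y\{f(y)+\frac1{2\lambda}\|y-x\|^2\}$; prox-bounded with threshold $\lambda_f=\sup\{\lambda>0: e_\lambda f(x)>-\infty\text{ for some }x\}$. $\partial_p^\lambda f(x)$ is the set of $v$ with $f(y)\ge f(x)+\langle v,y-x\rangle-\frac1{2\lambda}\|y-x\|^2$ for all $y$. The $\lambda$-proximal hull is $h_\lambda f:=-e_\lambda(-e_\lambda f)$ (equivalently $(f+\lambda^{-1}j)^{**}-\lambda^{-1}j$). $\operatorname{conv}g$ denotes the convex hull of a function $g$ (largest convex function below $g$). $\partial$ is the limiting subdifferential. *)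

theory Defs
  imports "HOL-Analysis.Analysis" "HOL-Library.Extended_Real"
begin

definition jfun :: "'a::euclidean_space \<Rightarrow> real" where
  "jfun x = (1/2) * (norm x)^2"

definition proper_fun :: "('a::euclidean_space \<Rightarrow> ereal) \<Rightarrow> bool" where
  "proper_fun f \<longleftrightarrow> (\<forall>x. f x \<noteq> -\<infinity>) \<and> (\<exists>x. f x \<noteq> \<infinity>)"

definition lsc_fun :: "('a::euclidean_space \<Rightarrow> ereal) \<Rightarrow> bool" where
  "lsc_fun f \<longleftrightarrow> (\<forall>x. f x \<le> Liminf (at x) f)"

definition edom :: "('a::euclidean_space \<Rightarrow> ereal) \<Rightarrow> 'a set" where
  "edom f = {x. f x < \<infinity>}"

definition moreau_env :: "real \<Rightarrow> ('a::euclidean_space \<Rightarrow> ereal) \<Rightarrow> 'a \<Rightarrow> ereal" where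
  "moreau_env l f x = (INF y. f y + ereal ((1 / (2 * l)) * (norm (y - x))^2))"

definition prox_bounded :: "('a::euclidean_space \<Rightarrow> ereal) \<Rightarrow> bool" where
  "prox_bounded f \<longleftrightarrow> (\<exists>l>0. \<exists>x. moreau_env l f x > -\<infinity>)"

definition prox_threshold :: "('a::euclidean_space \<Rightarrow> ereal) \<Rightarrow> ereal" where
  "prox_threshold f = Sup {ereal l | l. l > 0 \<and> (\<exists>x. moreau_env l f x > -\<infinity>)}"

definition prox_subdiff :: "real \<Rightarrow> ('a::euclidean_space \<Rightarrow> ereal) \<Rightarrow> 'a \<Rightarrow> 'a set" where
  "prox_subdiff l f x = {v. \<forall>y. f y \<ge> f x + ereal (inner v (y - x) - (1 / (2 * l)) * (norm (y - x))^2)}"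

definition prox_hull :: "real \<Rightarrow> ('a::euclidean_space \<Rightarrow> ereal) \<Rightarrow> 'a \<Rightarrow> ereal" where
  "prox_hull l f = (\<lambda>x. - moreau_env l (\<lambda>y. - moreau_env l f y) x)"

definition convex_efun :: "('a::euclidean_space \<Rightarrow> ereal) \<Rightarrow> bool" where
  "convex_efun g \<longleftrightarrow> convex {(x, a::real). g x \<le> ereal a}"

definition conv_fun :: "('a::euclidean_space \<Rightarrow> ereal) \<Rightarrow> 'a \<Rightarrow> ereal" where
  "conv_fun g x = (SUP h \<in> {h. convex_efun h \<and> (\<forall>y. h y \<le> g y)}. h x)"

text \<open>Regular (Frechet) subdifferential:
  liminf_{y -> x, y <> x} (f y - f x - <v, y - x>) / |y - x| >= 0, unfolded.\<close>
definition regular_subdiff :: "('a::euclidean_space \<Rightarrow> ereal) \<Rightarrow> 'a \<Rightarrow> 'a set" where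
  "regular_subdiff f x = {v. \<bar>f x\<bar> \<noteq> \<infinity> \<and>
     (\<forall>e>0. \<exists>d>0. \<forall>y. norm (y - x) < d \<longrightarrow>
        f y \<ge> f x + ereal (inner v (y - x) - e * norm (y - x)))}"

definition limiting_subdiff :: "('a::euclidean_space \<Rightarrow> ereal) \<Rightarrow> 'a \<Rightarrow> 'a set" where
  "limiting_subdiff f x = {v. \<bar>f x\<bar> \<noteq> \<infinity> \<and>
     (\<exists>xs vs. xs \<longlonglongrightarrow> x \<and> (\<lambda>k. f (xs k)) \<longlonglongrightarrow> f x \<and>
        (\<forall>k. vs k \<in> regular_subdiff f (xs k)) \<and> vs \<longlonglongrightarrow> v)}"

definition dom_subdiff :: "('a::euclidean_space \<Rightarrow> ereal) \<Rightarrow> 'a set" where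
  "dom_subdiff f = {x. limiting_subdiff f x \<noteq> {}}"

end

theory Submission
  imports Defs
begin

lemma reg_in_lim:
  assumes "v \<in> regular_subdiff F x"
  shows "x \<in> dom_subdiff F"
proof -
  have "\<bar>F x\<bar> \<noteq> \<infinity>" using assms unfolding regular_subdiff_def by auto
  then have "v \<in> limiting_subdiff F x"
    unfolding limiting_subdiff_def
    by (intro CollectI conjI exI[of _ "\<lambda>_. x"] exI[of _ "\<lambda>_. v"]) (auto simp: assms)
  then show ?thesis unfolding dom_subdiff_def by auto
qed

lemma quad_reg:
  assumes l: "0 < l" and fin: "\<bar>F x\<bar> \<noteq> \<infinity>"
    and H: "\<And>y. F y \<ge> F x + ereal (inner v (y - x) - (1 / (2 * l)) * (norm (y - x))^2)"
  shows "v \<in> regular_subdiff F x"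
  unfolding regular_subdiff_def
proof (intro CollectI conjI allI impI fin)
  fix e :: real assume e: "e > 0"
  show "\<exists>d>0. \<forall>y. norm (y - x) < d \<longrightarrow> F x + ereal (inner v (y - x) - e * norm (y - x)) \<le> F y"
  proof (intro exI[of _ "2*l*e"] conjI allI impI)
    show "2*l*e > 0" using l e by simp
    fix y assume y: "norm (y - x) < 2*l*e"
    have "(1 / (2 * l)) * (norm (y - x))^2 \<le> e * norm (y - x)"
    proof -
      have "(norm (y - x))^2 = norm (y-x) * norm (y-x)" by (simp add: power2_eq_square)
      also have "\<dots> \<le> (2*l*e) * norm (y-x)" using y by (intro mult_right_mono) auto
      finally show ?thesis using l by (simp add: field_simps)
    qed
    then have "F x + ereal (inner v (y - x) - e * norm (y - x)) \<le> F x + ereal (inner v (y - x) - (1 / (2 * l)) * (norm (y - x))^2)"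
      by (intro add_left_mono) simp
    also have "\<dots> \<le> F y" by (rule H)
    finally show "F x + ereal (inner v (y - x) - e * norm (y - x)) \<le> F y" .
  qed
qed

lemma ereal_shift1:
  fixes F1 F0 :: ereal
  assumes "F1 \<ge> F0 + ereal A"
  shows "F1 + ereal B \<ge> (F0 + ereal C) + ereal (A + B - C)"
  using assms by (cases F0; cases F1) auto

lemma ereal_shift2:
  fixes F1 F0 :: ereal
  assumes "F1 + ereal B \<ge> (F0 + ereal C) + ereal D"
  shows "F1 \<ge> F0 + ereal (C + D - B)"
  using assms by (cases F0; cases F1) auto

lemma jfun_id:
  fixes y p :: "'a::euclidean_space"
  assumes "l > 0"
  shows "jfun y / l = jfun p / l + inner ((1/l) *\<^sub>R p) (y - p) + (1 / (2 * l)) * (norm (y - p))^2"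
  using assms unfolding jfun_def
  by (simp add: power2_norm_eq_inner inner_diff_left inner_diff_right inner_commute field_simps)

lemma convex_lemma:
  assumes K: "convex_efun K" and fin: "K p = ereal c"
    and R: "\<And>e. e > 0 \<Longrightarrow> \<exists>d>0. \<forall>y. norm (y - p) < d \<longrightarrow> K y \<ge> K p + ereal (inner u (y - p) - e * norm (y - p))"
  shows "K y \<ge> K p + ereal (inner u (y - p))"
proof (rule ccontr)
  assume "\<not> ?thesis"
  then have lt: "K y < ereal (c + inner u (y - p))" using fin by simp
  obtain a where a1: "K y \<le> ereal a" and a2: "a < c + inner u (y - p)"
  proof (cases "K y")
    case (real r) then show ?thesis using lt that by auto
  next
    case PInf then show ?thesis using lt by simp
  next
    case MInf then show ?thesis using that[of "c + inner u (y - p) - 1"] by simp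
  qed
  define gap where "gap = c + inner u (y - p) - a"
  have gap: "gap > 0" using a2 unfolding gap_def by simp
  have ne: "y \<noteq> p" using lt fin by auto
  define n where "n = norm (y - p)"
  have n: "n > 0" using ne unfolding n_def by simp
  obtain d where d: "d > 0" and dR: "\<And>z. norm (z - p) < d \<Longrightarrow> K z \<ge> K p + ereal (inner u (z - p) - (gap/(2*n)) * norm (z - p))"
    using R[of "gap/(2*n)"] gap n by auto
  define t where "t = min (1/2) (d/(2*n))"
  have t0: "t > 0" using d n unfolding t_def by simp
  have t1: "t \<le> 1/2" unfolding t_def by simp
  have tn: "t * n < d" proof -
    have "t * n \<le> (d/(2*n)) * n" unfolding t_def using n by (intro mult_right_mono) auto
    also have "\<dots> = d/2" using n by simp
    finally show ?thesis using d by simp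
  qed
  define z where "z = (1 - t) *\<^sub>R p + t *\<^sub>R y"
  have zp: "z - p = t *\<^sub>R (y - p)" unfolding z_def by (simp add: algebra_simps)
  have nz: "norm (z - p) = t * n" unfolding zp n_def using t0 by simp
  have "(p, c) \<in> {(x, a::real). K x \<le> ereal a}" using fin by simp
  moreover have "(y, a) \<in> {(x, a::real). K x \<le> ereal a}" using a1 by simp
  ultimately have "(1 - t) *\<^sub>R (p, c) + t *\<^sub>R (y, a) \<in> {(x, a::real). K x \<le> ereal a}"
    using K unfolding convex_efun_def by (intro convexD) (use t0 t1 in auto)
  then have up: "K z \<le> ereal ((1 - t) * c + t * a)" unfolding z_def by simp
  have lo: "K z \<ge> ereal (c + (inner u (z - p) - (gap/(2*n)) * norm (z - p)))"
    using dR[of z] nz tn fin by simp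
  have "c + (inner u (z - p) - (gap/(2*n)) * norm (z - p)) \<le> (1 - t) * c + t * a"
    using up lo by (metis ereal_less_eq(3) order_trans)
  have "c + t * inner u (y - p) - t * (gap / 2) \<le> (1 - t) * c + t * a"
  proof -
    have "inner u (z - p) = t * inner u (y - p)" unfolding zp by simp
    moreover have "(gap/(2*n)) * norm (z - p) = t * (gap/2)" unfolding nz using n by simp
    ultimately show ?thesis using \<open>c + (inner u (z - p) - (gap/(2*n)) * norm (z - p)) \<le> (1 - t) * c + t * a\<close> by simp
  qed
  then have "t * (c + inner u (y - p) - a) \<le> t * (gap/2)" by (simp add: algebra_simps)
  then have "gap \<le> gap / 2" unfolding gap_def[symmetric] using t0 by simp
  then show False using gap by simp
qed

lemma limit_lemma:
  fixes K :: "'a::euclidean_space \<Rightarrow> ereal"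
  assumes H: "\<And>k. K y \<ge> K (xs k) + ereal (inner (u k) (y - xs k))"
    and xs: "xs \<longlonglongrightarrow> x" and u: "u \<longlonglongrightarrow> U" and Kx: "(\<lambda>k. K (xs k)) \<longlonglongrightarrow> K x"
    and fin: "\<bar>K x\<bar> \<noteq> \<infinity>"
  shows "K y \<ge> K x + ereal (inner U (y - x))"
proof -
  have "(\<lambda>k. inner (u k) (y - xs k)) \<longlonglongrightarrow> inner U (y - x)"
    by (intro tendsto_intros u xs)
  then have "(\<lambda>k. ereal (inner (u k) (y - xs k))) \<longlonglongrightarrow> ereal (inner U (y - x))"
    by (simp add: lim_ereal)
  then have "(\<lambda>k. K (xs k) + ereal (inner (u k) (y - xs k))) \<longlonglongrightarrow> K x + ereal (inner U (y - x))"
    by (intro tendsto_add_ereal fin Kx) auto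
  then show ?thesis by (rule LIMSEQ_le_const2) (use H in auto)
qed

lemma conv_le: "conv_fun g y \<le> g y"
  unfolding conv_fun_def by (rule SUP_least) auto

lemma conv_ge: "convex_efun h \<Longrightarrow> (\<And>y. h y \<le> g y) \<Longrightarrow> h y \<le> conv_fun g y"
  unfolding conv_fun_def by (rule SUP_upper2[of h]) auto

lemma conv_convex: "convex_efun (conv_fun g)"
proof -
  let ?S = "{h. convex_efun h \<and> (\<forall>y. h y \<le> g y)}"
  have "{(x, a::real). conv_fun g x \<le> ereal a} = (\<Inter>h\<in>?S. {(x, a::real). h x \<le> ereal a})"
    unfolding conv_fun_def by (auto simp: SUP_le_iff)
  moreover have "convex (\<Inter>h\<in>?S. {(x, a::real). h x \<le> ereal a})"
    by (rule convex_INT) (auto simp: convex_efun_def)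
  ultimately show ?thesis unfolding convex_efun_def by simp
qed

lemma affine_convex: "convex_efun (\<lambda>y. ereal (c + inner u (y - p)))"
  unfolding convex_efun_def convex_def
proof (clarsimp)
  fix x1 x2 :: 'a and a1 a2 s t :: real
  assume h: "c + inner u (x1 - p) \<le> a1" "c + inner u (x2 - p) \<le> a2" "0 \<le> s" "0 \<le> t" "s + t = 1"
  have "c + inner u (s *\<^sub>R x1 + t *\<^sub>R x2 - p) = (s + t) * c + s * inner u x1 + t * inner u x2 - (s + t) * inner u p"
    using h(5) by (simp add: inner_diff_right inner_add_right)
  also have "\<dots> = s * (c + inner u (x1 - p)) + t * (c + inner u (x2 - p))"
    by (simp add: inner_diff_right algebra_simps)
  also have "\<dots> \<le> s * a1 + t * a2" using h by (intro add_mono mult_left_mono) auto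
  finally show "c + inner u (s *\<^sub>R x1 + t *\<^sub>R x2 - p) \<le> s * a1 + t * a2" .
qed

lemma hull_unfold:
  "prox_hull l f y = - (INF z. - moreau_env l f z + ereal ((1 / (2 * l)) * (norm (z - y))^2))"
  unfolding prox_hull_def moreau_env_def[of l "\<lambda>y. - moreau_env l f y"] by simp

lemma env_le: "moreau_env l f z \<le> f y + ereal ((1 / (2 * l)) * (norm (y - z))^2)"
  unfolding moreau_env_def by (rule INF_lower) simp

lemma hull_le: "prox_hull l f y \<le> f y"
proof -
  have "- f y \<le> (INF z. - moreau_env l f z + ereal ((1 / (2 * l)) * (norm (z - y))^2))"
  proof (rule INF_greatest)
    fix z
    have "moreau_env l f z \<le> f y + ereal ((1 / (2 * l)) * (norm (z - y))^2)"
      using env_le[of l f z y] by (simp add: norm_minus_commute)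
    then show "- f y \<le> - moreau_env l f z + ereal ((1 / (2 * l)) * (norm (z - y))^2)"
      by (cases "f y"; cases "moreau_env l f z") auto
  qed
  then have "- (INF z. - moreau_env l f z + ereal ((1 / (2 * l)) * (norm (z - y))^2)) \<le> - (- f y)"
    unfolding ereal_minus_le_minus .
  then show ?thesis unfolding hull_unfold by simp
qed

lemma hull_epi:
  assumes l: "l > 0"
  shows "prox_hull l f y + ereal (jfun y / l) \<le> ereal a \<longleftrightarrow>
    (\<forall>z. moreau_env l f z \<le> ereal (a - inner z y / l + (norm z)^2/(2*l)))"
proof -
  have id: "\<And>z. a - jfun y / l + (1 / (2 * l)) * (norm (z - y))^2 = a - inner z y / l + (norm z)^2/(2*l)"
    using l unfolding jfun_def
    by (simp add: power2_norm_eq_inner inner_diff_left inner_diff_right inner_commute field_simps)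
  have "prox_hull l f y + ereal (jfun y / l) \<le> ereal a \<longleftrightarrow> prox_hull l f y \<le> ereal (a - jfun y / l)"
    by (cases "prox_hull l f y") auto
  also have "\<dots> \<longleftrightarrow> ereal (- (a - jfun y / l)) \<le> (INF z. - moreau_env l f z + ereal ((1 / (2 * l)) * (norm (z - y))^2))"
    unfolding hull_unfold by (simp add: ereal_uminus_le_reorder)
  also have "\<dots> \<longleftrightarrow> (\<forall>z. ereal (- (a - jfun y / l)) \<le> - moreau_env l f z + ereal ((1 / (2 * l)) * (norm (z - y))^2))"
    by (simp add: le_INF_iff)
  also have "\<dots> \<longleftrightarrow> (\<forall>z. moreau_env l f z \<le> ereal (a - jfun y / l + (1 / (2 * l)) * (norm (z - y))^2))"
    apply (rule all_cong1)
    subgoal for z by (cases "moreau_env l f z") auto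
    done
  finally show ?thesis unfolding id .
qed

lemma hull_convex:
  assumes l: "l > 0"
  shows "convex_efun (\<lambda>y. prox_hull l f y + ereal (jfun y / l))"
proof -
  have "{(y, a::real). prox_hull l f y + ereal (jfun y / l) \<le> ereal a} =
     (\<Inter>z. {(y, a::real). moreau_env l f z \<le> ereal (a - inner z y / l + (norm z)^2/(2*l))})"
    using hull_epi[OF l] by auto
  moreover have "convex (\<Inter>z. {(y, a::real). moreau_env l f z \<le> ereal (a - inner z y / l + (norm z)^2/(2*l))})"
  proof (rule convex_INT, unfold convex_def, clarsimp)
    fix z y1 y2 :: 'a and a1 a2 s t :: real
    assume h: "moreau_env l f z \<le> ereal (a1 - inner z y1 / l + (norm z)^2/(2*l))"
      "moreau_env l f z \<le> ereal (a2 - inner z y2 / l + (norm z)^2/(2*l))"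
      "0 \<le> s" "0 \<le> t" "s + t = 1"
    let ?A1 = "a1 - inner z y1 / l + (norm z)^2/(2*l)"
    let ?A2 = "a2 - inner z y2 / l + (norm z)^2/(2*l)"
    have eq: "s * a1 + t * a2 - inner z (s *\<^sub>R y1 + t *\<^sub>R y2) / l + (norm z)^2/(2*l) = s * ?A1 + t * ?A2"
    proof -
      have "s * a1 + t * a2 - inner z (s *\<^sub>R y1 + t *\<^sub>R y2) / l + (norm z)^2/(2*l)
         = s * a1 + t * a2 - (s * inner z y1 + t * inner z y2) / l + (s + t) * ((norm z)^2/(2*l))"
        using h(5) by (simp add: inner_add_right)
      also have "\<dots> = s * ?A1 + t * ?A2" by (simp add: algebra_simps diff_divide_distrib add_divide_distrib)
      finally show ?thesis .
    qed
    have "min ?A1 ?A2 \<le> s * ?A1 + t * ?A2"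
    proof -
      have "min ?A1 ?A2 = (s + t) * min ?A1 ?A2" using h(5) by simp
      also have "\<dots> = s * min ?A1 ?A2 + t * min ?A1 ?A2" by (simp add: distrib_right)
      finally have "min ?A1 ?A2 = s * min ?A1 ?A2 + t * min ?A1 ?A2" .
      also have "\<dots> \<le> s * ?A1 + t * ?A2" using h(3,4) by (intro add_mono mult_left_mono) auto
      finally show ?thesis .
    qed
    then have "moreau_env l f z \<le> ereal (s * ?A1 + t * ?A2)"
    proof -
      have "moreau_env l f z \<le> ereal (min ?A1 ?A2)" using h(1,2) by (simp add: min_def)
      also have "\<dots> \<le> ereal (s * ?A1 + t * ?A2)" using \<open>min ?A1 ?A2 \<le> s * ?A1 + t * ?A2\<close> by (simp only: ereal_less_eq(3))
      finally show ?thesis .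
    qed
    then show "moreau_env l f z \<le> ereal (s * a1 + t * a2 - inner z (s *\<^sub>R y1 + t *\<^sub>R y2) / l + (norm z)^2/(2*l))"
      unfolding eq .
  qed
  ultimately show ?thesis unfolding convex_efun_def by simp
qed

lemma hull_lower:
  assumes l: "l > 0" and fx: "f x = ereal fx" and v: "v \<in> prox_subdiff l f x"
  shows "prox_hull l f y \<ge> ereal (fx + inner v (y - x) - (1 / (2 * l)) * (norm (y - x))^2)"
proof -
  define z0 where "z0 = x + l *\<^sub>R v"
  have env: "moreau_env l f z0 \<ge> ereal (fx + (l/2) * (norm v)^2)"
    unfolding moreau_env_def
  proof (rule INF_greatest)
    fix w
    have fw: "f w \<ge> ereal (fx + (inner v (w - x) - (1 / (2 * l)) * (norm (w - x))^2))"
      using v fx unfolding prox_subdiff_def by simp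
    have id: "fx + (inner v (w - x) - (1 / (2 * l)) * (norm (w - x))^2) + (1 / (2 * l)) * (norm (w - z0))^2
        = fx + (l/2) * (norm v)^2"
      unfolding z0_def using l
      by (simp add: power2_norm_eq_inner inner_diff_left inner_diff_right inner_add_left inner_add_right inner_commute field_simps)
    have "f w + ereal ((1 / (2 * l)) * (norm (w - z0))^2) \<ge>
       ereal (fx + (inner v (w - x) - (1 / (2 * l)) * (norm (w - x))^2) + (1 / (2 * l)) * (norm (w - z0))^2)"
      using fw by (cases "f w") auto
    then show "ereal (fx + (l/2) * (norm v)^2) \<le> f w + ereal ((1 / (2 * l)) * (norm (w - z0))^2)"
      unfolding id .
  qed
  have "(INF z. - moreau_env l f z + ereal ((1 / (2 * l)) * (norm (z - y))^2))
      \<le> - moreau_env l f z0 + ereal ((1 / (2 * l)) * (norm (z0 - y))^2)"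
    by (rule INF_lower) simp
  also have "\<dots> \<le> ereal (- (fx + (l/2) * (norm v)^2) + (1 / (2 * l)) * (norm (z0 - y))^2)"
    using env by (cases "moreau_env l f z0") auto
  finally have "- ereal (- (fx + (l/2) * (norm v)^2) + (1 / (2 * l)) * (norm (z0 - y))^2) \<le> prox_hull l f y"
    unfolding hull_unfold ereal_minus_le_minus .
  then have A: "prox_hull l f y \<ge> ereal ((fx + (l/2) * (norm v)^2) - (1 / (2 * l)) * (norm (z0 - y))^2)"
    by (simp add: ac_simps)
  have B: "(fx + (l/2) * (norm v)^2) - (1 / (2 * l)) * (norm (z0 - y))^2 = fx + inner v (y - x) - (1 / (2 * l)) * (norm (y - x))^2"
    unfolding z0_def using l
    by (simp add: power2_norm_eq_inner inner_diff_left inner_diff_right inner_add_left inner_add_right inner_commute field_simps)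
  show ?thesis using A unfolding B .
qed

lemma jfun_id2:
  fixes y p w :: "'a::euclidean_space"
  assumes "l > 0"
  shows "jfun p / l + inner w (y - p) - jfun y / l = inner (w - (1/l) *\<^sub>R p) (y - p) - (1 / (2 * l)) * (norm (y - p))^2"
  using jfun_id[OF assms, of y p] by (simp add: inner_diff_left)

lemma a_to_b:
  assumes l: "l > 0" and fx: "f x = ereal fx" and v: "v \<in> prox_subdiff l f x"
  shows "prox_hull l f x = f x \<and> x \<in> dom_subdiff (prox_hull l f)"
proof -
  have low: "\<And>y. prox_hull l f y \<ge> ereal (fx + inner v (y - x) - (1 / (2 * l)) * (norm (y - x))^2)"
    using hull_lower[OF l fx v] .
  have hx: "prox_hull l f x = f x" using low[of x] hull_le[of l f x] fx by (simp add: antisym)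
  have "v \<in> regular_subdiff (prox_hull l f) x"
  proof (rule quad_reg[OF l])
    show "\<bar>prox_hull l f x\<bar> \<noteq> \<infinity>" using hx fx by simp
    fix y show "prox_hull l f x + ereal (inner v (y - x) - (1 / (2 * l)) * (norm (y - x))^2) \<le> prox_hull l f y"
      using low[of y] hx fx by (simp add: algebra_simps)
  qed
  then show ?thesis using hx reg_in_lim by blast
qed

lemma b_to_a:
  assumes l: "l > 0" and fx: "f x = ereal fx" and hx: "prox_hull l f x = f x"
    and dom: "x \<in> dom_subdiff (prox_hull l f)"
  shows "prox_subdiff l f x \<noteq> {}"
proof -
  define h where "h = prox_hull l f"
  define K where "K = (\<lambda>y. h y + ereal (jfun y / l))"
  have Kc: "convex_efun K" unfolding K_def h_def by (rule hull_convex[OF l])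
  obtain w xs vs where xs: "xs \<longlonglongrightarrow> x" and hxs: "(\<lambda>k. h (xs k)) \<longlonglongrightarrow> h x"
    and vs: "\<And>k. vs k \<in> regular_subdiff h (xs k)" and vw: "vs \<longlonglongrightarrow> w"
    using dom unfolding dom_subdiff_def limiting_subdiff_def h_def by blast
  define u where "u = (\<lambda>k. vs k + (1/l) *\<^sub>R xs k)"
  have glob: "K y \<ge> K (xs k) + ereal (inner (u k) (y - xs k))" for y k
  proof -
    let ?p = "xs k"
    have fin: "\<bar>h ?p\<bar> \<noteq> \<infinity>" using vs[of k] unfolding regular_subdiff_def by auto
    have Kp: "K ?p = ereal (real_of_ereal (h ?p) + jfun ?p / l)" unfolding K_def using fin
      by (cases "h ?p") auto
    show ?thesis
    proof (rule convex_lemma[OF Kc Kp])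
      fix e :: real assume e: "e > 0"
      obtain d where d: "d > 0" and dR: "\<And>y. norm (y - ?p) < d \<Longrightarrow> h y \<ge> h ?p + ereal (inner (vs k) (y - ?p) - e * norm (y - ?p))"
        using vs[of k] e unfolding regular_subdiff_def by blast
      show "\<exists>d>0. \<forall>y. norm (y - ?p) < d \<longrightarrow> K y \<ge> K ?p + ereal (inner (u k) (y - ?p) - e * norm (y - ?p))"
      proof (intro exI[of _ d] conjI allI impI d)
        fix y assume y: "norm (y - ?p) < d"
        have "K y \<ge> (h ?p + ereal (jfun ?p / l)) + ereal (inner (vs k) (y - ?p) - e * norm (y - ?p) + jfun y / l - jfun ?p / l)"
          unfolding K_def by (rule ereal_shift1[OF dR[OF y]])
        moreover have "inner (vs k) (y - ?p) - e * norm (y - ?p) + jfun y / l - jfun ?p / l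
            \<ge> inner (u k) (y - ?p) - e * norm (y - ?p)"
          using jfun_id[OF l, of y ?p] l unfolding u_def by (simp add: inner_add_left)
        ultimately show "K y \<ge> K ?p + ereal (inner (u k) (y - ?p) - e * norm (y - ?p))"
          unfolding K_def by (meson add_left_mono ereal_less_eq(3) order_trans)
      qed
    qed
  qed
  have hxf: "h x = ereal fx" using hx fx unfolding h_def by simp
  have Kx: "K x = ereal (fx + jfun x / l)" unfolding K_def hxf by simp
  have jc: "(\<lambda>k. jfun (xs k) / l) \<longlonglongrightarrow> jfun x / l" unfolding jfun_def using l by (intro tendsto_intros xs) auto
  have KK: "(\<lambda>k. K (xs k)) \<longlonglongrightarrow> K x" unfolding K_def
    by (rule tendsto_add_ereal) (use hxf hxs jc in auto)
  have uU: "u \<longlonglongrightarrow> w + (1/l) *\<^sub>R x" unfolding u_def by (intro tendsto_intros vw xs)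
  have "prox_subdiff l f x \<noteq> {}"
  proof -
    have "f y \<ge> f x + ereal (inner w (y - x) - (1 / (2 * l)) * (norm (y - x))^2)" for y
    proof -
      have "K y \<ge> K x + ereal (inner (w + (1/l) *\<^sub>R x) (y - x))"
        by (rule limit_lemma[OF glob xs uU KK]) (use Kx in simp)
      moreover have "K y \<le> f y + ereal (jfun y / l)" unfolding K_def h_def
        by (intro add_right_mono hull_le)
      ultimately have "f y + ereal (jfun y / l) \<ge> (f x + ereal (jfun x / l)) + ereal (inner (w + (1/l) *\<^sub>R x) (y - x))"
        using Kx fx by simp
      from ereal_shift2[OF this] show ?thesis
        using jfun_id2[OF l, of x "w + (1/l) *\<^sub>R x" y] by simp
    qed
    then show ?thesis unfolding prox_subdiff_def by blast
  qed
  then show ?thesis .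
qed

lemma a_to_c:
  assumes l: "l > 0" and fx: "f x = ereal fx" and v: "v \<in> prox_subdiff l f x"
  shows "conv_fun (\<lambda>y. f y + ereal (jfun y / l)) x = f x + ereal (jfun x / l)
            \<and> x \<in> dom_subdiff (conv_fun (\<lambda>y. f y + ereal (jfun y / l)))"
proof -
  define g where "g = (\<lambda>y. f y + ereal (jfun y / l))"
  define u where "u = v + (1/l) *\<^sub>R x"
  define L where "L = (\<lambda>y. ereal ((fx + jfun x / l) + inner u (y - x)))"
  have Lg: "L y \<le> g y" for y
  proof -
    have fy: "f y \<ge> f x + ereal (inner v (y - x) - (1 / (2 * l)) * (norm (y - x))^2)"
      using v unfolding prox_subdiff_def by simp
    have eq: "inner v (y - x) - (1 / (2 * l)) * (norm (y - x))^2 + jfun y / l - jfun x / l = inner u (y - x)"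
      using jfun_id[OF l, of y x] unfolding u_def by (simp add: inner_add_left)
    have "g y \<ge> (f x + ereal (jfun x / l)) + ereal (inner v (y - x) - (1 / (2 * l)) * (norm (y - x))^2 + jfun y / l - jfun x / l)"
      unfolding g_def by (rule ereal_shift1[OF fy])
    then have "g y \<ge> (f x + ereal (jfun x / l)) + ereal (inner u (y - x))" unfolding eq .
    then show ?thesis unfolding L_def fx by simp
  qed
  have Lc: "convex_efun L" unfolding L_def by (rule affine_convex)
  have lo: "L y \<le> conv_fun g y" for y by (rule conv_ge[OF Lc Lg])
  have cx: "conv_fun g x = g x"
    using lo[of x] conv_le[of g x] fx unfolding L_def g_def by (simp add: antisym)
  have gx: "g x = ereal (fx + jfun x / l)" unfolding g_def fx by simp
  have "u \<in> regular_subdiff (conv_fun g) x"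
  proof (rule quad_reg[OF l])
    show "\<bar>conv_fun g x\<bar> \<noteq> \<infinity>" using cx gx by simp
    fix y
    have "conv_fun g x + ereal (inner u (y - x) - (1 / (2 * l)) * (norm (y - x))^2) \<le> L y"
      unfolding cx gx L_def using l by simp
    then show "conv_fun g x + ereal (inner u (y - x) - (1 / (2 * l)) * (norm (y - x))^2) \<le> conv_fun g y"
      using lo[of y] by (rule order_trans)
  qed
  then show ?thesis using cx reg_in_lim unfolding g_def by blast
qed

lemma c_to_a:
  assumes l: "l > 0" and fx: "f x = ereal fx"
    and cx: "conv_fun (\<lambda>y. f y + ereal (jfun y / l)) x = f x + ereal (jfun x / l)"
    and dom: "x \<in> dom_subdiff (conv_fun (\<lambda>y. f y + ereal (jfun y / l)))"
  shows "prox_subdiff l f x \<noteq> {}"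
proof -
  define g where "g = (\<lambda>y. f y + ereal (jfun y / l))"
  define K where "K = conv_fun g"
  have Kc: "convex_efun K" unfolding K_def by (rule conv_convex)
  obtain w xs vs where xs: "xs \<longlonglongrightarrow> x" and Kxs: "(\<lambda>k. K (xs k)) \<longlonglongrightarrow> K x"
    and vs: "\<And>k. vs k \<in> regular_subdiff K (xs k)" and vw: "vs \<longlonglongrightarrow> w"
    using dom unfolding dom_subdiff_def limiting_subdiff_def K_def g_def by blast
  have glob: "K y \<ge> K (xs k) + ereal (inner (vs k) (y - xs k))" for y k
  proof -
    let ?p = "xs k"
    have fin: "\<bar>K ?p\<bar> \<noteq> \<infinity>" using vs[of k] unfolding regular_subdiff_def by auto
    have Kp: "K ?p = ereal (real_of_ereal (K ?p))" using fin by (cases "K ?p") auto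
    show ?thesis
      by (rule convex_lemma[OF Kc Kp]) (use vs[of k] in \<open>auto simp: regular_subdiff_def\<close>)
  qed
  have Kx: "K x = ereal (fx + jfun x / l)" unfolding K_def g_def cx fx by simp
  have "f y \<ge> f x + ereal (inner (w - (1/l) *\<^sub>R x) (y - x) - (1 / (2 * l)) * (norm (y - x))^2)" for y
  proof -
    have "K y \<ge> K x + ereal (inner w (y - x))"
      by (rule limit_lemma[OF glob xs vw Kxs]) (use Kx in simp)
    moreover have "K y \<le> g y" unfolding K_def by (rule conv_le)
    ultimately have "f y + ereal (jfun y / l) \<ge> (f x + ereal (jfun x / l)) + ereal (inner w (y - x))"
      using Kx fx unfolding g_def by simp
    from ereal_shift2[OF this] show ?thesis
      using jfun_id2[OF l, of x w y] by simp
  qed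
  then show ?thesis unfolding prox_subdiff_def by blast
qed

theorem mainTheorem5:
  fixes f :: "'a::euclidean_space \<Rightarrow> ereal" and l :: real and x :: 'a
  assumes "proper_fun f" and "lsc_fun f" and "prox_bounded f"
    and "prox_threshold f > 0"
    and "0 < l" and "ereal l < prox_threshold f"
    and "x \<in> edom f"
  shows "(prox_subdiff l f x \<noteq> {} \<longleftrightarrow>
            prox_hull l f x = f x \<and> x \<in> dom_subdiff (prox_hull l f))
       \<and> (prox_subdiff l f x \<noteq> {} \<longleftrightarrow>
            conv_fun (\<lambda>y. f y + ereal (jfun y / l)) x = f x + ereal (jfun x / l)
            \<and> x \<in> dom_subdiff (conv_fun (\<lambda>y. f y + ereal (jfun y / l))))"
proof -
  have "f x \<noteq> -\<infinity>" using assms(1) unfolding proper_fun_def by auto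
  moreover have "f x \<noteq> \<infinity>" using assms(7) unfolding edom_def by auto
  ultimately obtain fx where fx: "f x = ereal fx" by (cases "f x") auto
  show ?thesis
    using a_to_b[of l f x fx _] b_to_a[of l f x fx] a_to_c[of l f x fx _] c_to_a[of l f x fx] assms(5) fx
    by blast
qed

end
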